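(* Let $K$ be an $n$-dimensional oriented, well-centered, manifold-like simplicial complex with boundary subcomplex $\partial K$ and circumcentric dual cell complex, and let $1\le k\le n$. For every primal discrete form $\alpha\in\Omega_d^{k-1}(K)$ and every dual discrete form $\hat\beta=(\hat\beta_{\mathrm i},\hat\beta_{\mathrm b})\in\Omega_d^{n-k}(\star K)$, $$\langle \mathbf{d}\alpha\wedge\hat\beta_{\mathrm i},K\rangle+(-1)^{k-1}\langle \alpha\wedge(\mathbf{d}_{\mathrm i}\hat\beta_{\mathrm i}+\mathbf{d}_{\mathrm b}\hat\beta_{\mathrm b}),K\rangle=\langle \alpha|_{\partial K}\wedge\hat\beta_{\mathrm b},\partial K\rangle .$$
   Context: Setting. $K$ is an $n$-dimensional manifold-like simplicial complex (every simplex is a face of some $n$-simplex), oriented ($n$-simplices sharing an $(n-1)$-face are coherently oriented, lower-dimensional simplices are individually oriented) and well-centered (every simplex contains its circumcenter in its interior). $\partial K$ is the $(n-1)$-dimensional boundary subcomplex: the $(n-1)$-simplices that are faces of exactly one $n$-simplex, together with all their faces. For simplices $\sigma^{j-1}\prec\sigma^{j}$ (face relation) let $[\sigma^{j-1}:\sigma^{j}]\in\{\pm1\}$ be the coefficient of $\sigma^{j-1}$ in the simplicial boundary $\partial[v_0,\dots,v_j]=\sum_i(-1)^i[v_0,\dots,\widehat{v_i},\dots,v_j]$. Dual cells. Each simplex $\sigma^j\in K$ has a circumcentric interior dual $(n-j)$-cell $\star_{\mathrm i}\sigma^j$; each simplex $\tau^j\in\partial K$ has a boundary dual $(n-1-j)$-cell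 $\star_{\mathrm b}\tau^j$ (its circumcentric dual within $\partial K$), lying on the boundary of the dual complex. Discrete forms. $\Omega_d^j(K)$ (resp. $\Omega_d^j(\partial K)$) is the space of real-valued functions on the $j$-simplices of $K$ (resp. $\partial K$); $\Omega_d^m(\star_{\mathrm i}K)$ is the space of real functions on interior dual $m$-cells $\star_{\mathrm i}\sigma^{n-m}$; $\Omega_d^m(\partial(\star K))$ is the space of real functions on boundary dual $m$-cells $\star_{\mathrm b}\tau^{n-1-m}$, $\tau\in\partial K$; $\Omega_d^m(\star K)=\Omega_d^m(\star_{\mathrm i}K)\times\Omega_d^m(\partial(\star K))$, elements written $\hat\beta=(\hat\beta_{\mathrm i},\hat\beta_{\mathrm b})$. For primal $\alpha$, $\alpha|_{\partial K}$ is its restriction to simplices of $\partial K$. Derivatives. Primal: $(\mathbf d\alpha)(\sigma^{j})=\sum_{\sigma^{j-1}\prec\sigma^{j}}[\sigma^{j-1}:\sigma^{j}]\,\alpha(\sigma^{j-1})$. Dual: for $\hat\beta\in\Omega_d^{m}(\star K)$, $m\le n-1$, set $j=n-m$; then $\mathbf d_{\mathrm i}\hat\beta_{\mathrm i},\mathbf d_{\mathrm b}\hat\beta_{\mathrm b}\in\Omega_d^{m+1}(\star_{\mathrm i}K)$ are $(\mathbf d_{\mathrm i}\hat\beta_{\mathrm i})(\star_{\mathrm i}\sigma^{j-1})=(-1)^{j}\sum_{\sigma^{j}\succ\sigma^{j-1}}[\sigma^{j-1}:\sigma^{j}]\,\hat\beta_{\mathrm i}(\star_{\mathrm i}\sigma^{j})$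 and $(\mathbf d_{\mathrm b}\hat\beta_{\mathrm b})(\star_{\mathrm i}\sigma^{j-1})=(-1)^{j-1}\hat\beta_{\mathrm b}(\star_{\mathrm b}\sigma^{j-1})$ if $\sigma^{j-1}\in\partial K$, and $0$ otherwise. Primal-dual wedge pairings (extended bilinearly). For $\alpha\in\Omega_d^j(K)$, $\hat\beta\in\Omega_d^{n-j}(\star_{\mathrm i}K)$: $\langle\alpha\wedge\hat\beta,K\rangle=\sum_{\sigma^j\in K}\alpha(\sigma^j)\hat\beta(\star_{\mathrm i}\sigma^j)$ and $\langle\hat\beta\wedge\alpha,K\rangle=(-1)^{j(n-j)}\langle\alpha\wedge\hat\beta,K\rangle$. For $\alpha\in\Omega_d^j(\partial K)$, $\hat\gamma\in\Omega_d^{n-1-j}(\partial(\star K))$: $\langle\alpha\wedge\hat\gamma,\partial K\rangle=\sum_{\tau^j\in\partial K}\alpha(\tau^j)\hat\gamma(\star_{\mathrm b}\tau^j)$ and $\langle\hat\gamma\wedge\alpha,\partial K\rangle=(-1)^{j(n-1-j)}\langle\alpha\wedge\hat\gamma,\partial K\rangle$. *)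

theory Defs
  imports "HOL-Analysis.Analysis"
begin

text \<open>
A simplex is a finite nonempty set of vertices; its dimension is card - 1.
Vertices carry a linear order; an orientation of the simplices is encoded by
a sign function ori with ori s in {1,-1}, meaning that s is oriented as
ori s times the increasing ordering of its vertices.
Discrete forms (primal, interior dual, boundary dual) are real functions
indexed by simplices (dual cells are indexed by the simplices they are dual to).
\<close>

definition simplex_dim :: "'v set \<Rightarrow> nat" where
  "simplex_dim s = card s - 1"

definition incidence :: "('v::linorder set \<Rightarrow> int) \<Rightarrow> 'v set \<Rightarrow> 'v set \<Rightarrow> real" where
  "incidence ori t s =
     (let w = the_elem (s - t) in
        real_of_int (ori s * ori t) * (-1) ^ card {u \<in> s. u < w})"

definition simplicial_complex :: "'v set set \<Rightarrow> bool" where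
  "simplicial_complex K \<longleftrightarrow> finite K \<and>
     (\<forall>s\<in>K. finite s \<and> s \<noteq> {}) \<and>
     (\<forall>s\<in>K. \<forall>t. t \<subseteq> s \<and> t \<noteq> {} \<longrightarrow> t \<in> K)"

definition manifold_like :: "'v set set \<Rightarrow> nat \<Rightarrow> bool" where
  "manifold_like K n \<longleftrightarrow> simplicial_complex K \<and>
     (\<forall>s\<in>K. card s \<le> n + 1) \<and>
     (\<forall>s\<in>K. \<exists>r\<in>K. card r = n + 1 \<and> s \<subseteq> r)"

definition orientation :: "'v set set \<Rightarrow> ('v set \<Rightarrow> int) \<Rightarrow> bool" where
  "orientation K ori \<longleftrightarrow> (\<forall>s\<in>K. ori s = 1 \<or> ori s = -1)"

definition coherently_oriented :: "'v::linorder set set \<Rightarrow> nat \<Rightarrow> ('v set \<Rightarrow> int) \<Rightarrow> bool" where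
  "coherently_oriented K n ori \<longleftrightarrow> orientation K ori \<and>
     (\<forall>s1\<in>K. \<forall>s2\<in>K. \<forall>t\<in>K. card s1 = n + 1 \<and> card s2 = n + 1 \<and> s1 \<noteq> s2 \<and>
        card t = n \<and> t \<subseteq> s1 \<and> t \<subseteq> s2 \<longrightarrow>
        incidence ori t s1 = - incidence ori t s2)"

definition well_centered :: "'v set set \<Rightarrow> ('v \<Rightarrow> 'a::euclidean_space) \<Rightarrow> bool" where
  "well_centered K pos \<longleftrightarrow>
     (\<forall>s\<in>K. inj_on pos s \<and> \<not> affine_dependent (pos ` s) \<and>
        (\<exists>c. c \<in> affine hull (pos ` s) \<and>
             (\<forall>v\<in>s. \<forall>w\<in>s. dist c (pos v) = dist c (pos w)) \<and>
             c \<in> rel_interior (convex hull (pos ` s))))"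

definition bdry :: "'v set set \<Rightarrow> nat \<Rightarrow> 'v set set" where
  "bdry K n = {t. \<exists>r\<in>K. card r = n \<and> card {s\<in>K. card s = n + 1 \<and> r \<subseteq> s} = 1 \<and>
                     t \<noteq> {} \<and> t \<subseteq> r}"

definition primal_d :: "'v::linorder set set \<Rightarrow> ('v set \<Rightarrow> int) \<Rightarrow> ('v set \<Rightarrow> real) \<Rightarrow> 'v set \<Rightarrow> real" where
  "primal_d K ori \<alpha> s = (\<Sum>t\<in>{t\<in>K. t \<subseteq> s \<and> card t + 1 = card s}. incidence ori t s * \<alpha> t)"

text \<open>Dual derivatives of a dual m-form (m \<le> n-1), j = n - m; the value at
the interior dual cell of a (j-1)-simplex t.\<close>
definition dual_d_i :: "'v::linorder set set \<Rightarrow> ('v set \<Rightarrow> int) \<Rightarrow> nat \<Rightarrow> nat \<Rightarrow> ('v set \<Rightarrow> real) \<Rightarrow> 'v set \<Rightarrow> real" where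
  "dual_d_i K ori n m \<beta> t = (-1) ^ (n - m) *
     (\<Sum>s\<in>{s\<in>K. t \<subseteq> s \<and> card s = n - m + 1}. incidence ori t s * \<beta> s)"

definition dual_d_b :: "'v set set \<Rightarrow> nat \<Rightarrow> nat \<Rightarrow> ('v set \<Rightarrow> real) \<Rightarrow> 'v set \<Rightarrow> real" where
  "dual_d_b K n m \<beta> t = (if t \<in> bdry K n then (-1) ^ (n - m - 1) * \<beta> t else 0)"

definition wedge_K :: "'v set set \<Rightarrow> nat \<Rightarrow> ('v set \<Rightarrow> real) \<Rightarrow> ('v set \<Rightarrow> real) \<Rightarrow> real" where
  "wedge_K K j \<alpha> \<beta> = (\<Sum>s\<in>{s\<in>K. card s = j + 1}. \<alpha> s * \<beta> s)"

definition wedge_bK :: "'v set set \<Rightarrow> nat \<Rightarrow> nat \<Rightarrow> ('v set \<Rightarrow> real) \<Rightarrow> ('v set \<Rightarrow> real) \<Rightarrow> real" where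
  "wedge_bK K n j \<alpha> \<gamma> = (\<Sum>t\<in>{t\<in>bdry K n. card t = j + 1}. \<alpha> t * \<gamma> t)"

definition restrict_bdry :: "'v set set \<Rightarrow> nat \<Rightarrow> ('v set \<Rightarrow> real) \<Rightarrow> 'v set \<Rightarrow> real" where
  "restrict_bdry K n \<alpha> t = (if t \<in> bdry K n then \<alpha> t else 0)"

end

theory Submission
  imports Defs
begin

theorem proposition1:
  fixes K :: "'v::linorder set set" and n k :: nat
    and ori :: "'v set \<Rightarrow> int" and pos :: "'v \<Rightarrow> 'a::euclidean_space"
    and \<alpha> \<beta>i \<beta>b :: "'v set \<Rightarrow> real"
  assumes "manifold_like K n"
    and "coherently_oriented K n ori"
    and "well_centered K pos"
    and "1 \<le> k" and "k \<le> n"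
  shows "wedge_K K k (primal_d K ori \<alpha>) \<beta>i
         + (-1) ^ (k - 1) * wedge_K K (k - 1) \<alpha>
             (\<lambda>t. dual_d_i K ori n (n - k) \<beta>i t + dual_d_b K n (n - k) \<beta>b t)
         = wedge_bK K n (k - 1) (restrict_bdry K n \<alpha>) \<beta>b"
proof -
  have sc: "simplicial_complex K" using assms(1) by (simp add: manifold_like_def)
  hence finK: "finite K" by (simp add: simplicial_complex_def)
  have bK: "bdry K n \<subseteq> K"
    using sc unfolding bdry_def simplicial_complex_def by blast
  define A where "A = {s\<in>K. card s = k + 1}"
  define B where "B = {t\<in>K. card t = k}"
  have fA: "finite A" and fB: "finite B" using finK by (auto simp: A_def B_def)
  have nk: "n - (n - k) = k" "n - (n - k) - 1 = k - 1" "k - 1 + 1 = k" using assms(4,5) by auto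
  define f where "f t s = incidence ori t s * \<alpha> t * \<beta>i s" for t s
  have T1: "wedge_K K k (primal_d K ori \<alpha>) \<beta>i = (\<Sum>s\<in>A. \<Sum>t\<in>{t. t\<in>B \<and> t \<subseteq> s}. f t s)"
    unfolding wedge_K_def primal_d_def A_def[symmetric] sum_distrib_right
  proof (rule sum.cong[OF refl])
    fix s assume "s \<in> A"
    hence "{t\<in>K. t \<subseteq> s \<and> card t + 1 = card s} = {t. t\<in>B \<and> t \<subseteq> s}"
      by (auto simp: A_def B_def)
    thus "(\<Sum>t\<in>{t\<in>K. t \<subseteq> s \<and> card t + 1 = card s}. incidence ori t s * \<alpha> t * \<beta>i s)
         = (\<Sum>t\<in>{t. t\<in>B \<and> t \<subseteq> s}. f t s)" by (simp add: f_def)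
  qed
  also have "\<dots> = (\<Sum>t\<in>B. \<Sum>s\<in>{s. s\<in>A \<and> t \<subseteq> s}. f t s)"
    by (rule sum.swap_restrict[OF fA fB])
  finally have T1': "wedge_K K k (primal_d K ori \<alpha>) \<beta>i = (\<Sum>t\<in>B. \<Sum>s\<in>{s. s\<in>A \<and> t \<subseteq> s}. f t s)" .
  have T2: "(-1) ^ (k - 1) * wedge_K K (k - 1) \<alpha>
             (\<lambda>t. dual_d_i K ori n (n - k) \<beta>i t + dual_d_b K n (n - k) \<beta>b t)
     = (\<Sum>t\<in>B. - (\<Sum>s\<in>{s. s\<in>A \<and> t \<subseteq> s}. f t s) + (if t \<in> bdry K n then \<alpha> t * \<beta>b t else 0))"
    unfolding wedge_K_def nk(3) B_def[symmetric] sum_distrib_left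
  proof (rule sum.cong[OF refl])
    fix t assume "t \<in> B"
    have e: "{s\<in>K. t \<subseteq> s \<and> card s = k + 1} = {s. s\<in>A \<and> t \<subseteq> s}" by (auto simp: A_def)
    have p1: "(-1::real) ^ (k - 1) * (-1) ^ k = -1"
    proof -
      obtain j where "k = Suc j" using assms(4) by (cases k) auto
      thus ?thesis by (simp add: power_mult_distrib[symmetric])
    qed
    have p2: "(-1::real) ^ (k - 1) * (-1) ^ (k - 1) = 1"
      by (simp add: power_mult_distrib[symmetric])
    have "(-1::real) ^ (k - 1) * (\<alpha> t * (dual_d_i K ori n (n - k) \<beta>i t + dual_d_b K n (n - k) \<beta>b t))
       = ((-1) ^ (k - 1) * (-1) ^ k) * (\<Sum>s\<in>{s. s\<in>A \<and> t \<subseteq> s}. f t s)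
         + (if t \<in> bdry K n then ((-1) ^ (k - 1) * (-1) ^ (k - 1)) * (\<alpha> t * \<beta>b t) else 0)"
      unfolding dual_d_i_def dual_d_b_def nk e f_def
      by (simp add: sum_distrib_left sum_distrib_right algebra_simps)
    thus "(-1::real) ^ (k - 1) * (\<alpha> t * (dual_d_i K ori n (n - k) \<beta>i t + dual_d_b K n (n - k) \<beta>b t))
       = - (\<Sum>s\<in>{s. s\<in>A \<and> t \<subseteq> s}. f t s) + (if t \<in> bdry K n then \<alpha> t * \<beta>b t else 0)"
      unfolding p1 p2 by simp
  qed
  have R: "wedge_bK K n (k - 1) (restrict_bdry K n \<alpha>) \<beta>b
      = (\<Sum>t\<in>B. if t \<in> bdry K n then \<alpha> t * \<beta>b t else 0)"
  proof -
    have "{t\<in>bdry K n. card t = k} = {t\<in>B. t \<in> bdry K n}" using bK by (auto simp: B_def)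
    thus ?thesis unfolding wedge_bK_def nk(3) restrict_bdry_def
      by (simp add: sum.inter_filter[OF fB])
  qed
  show ?thesis unfolding T1' T2 R sum.distrib[symmetric] by simp
qed

end
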